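(* There exist Polish spaces $I_X, I_Y \subseteq \mathbb{C}$, a base $\mathcal{B}$ of $I_X$ consisting of clopen sets, and a continuous, open surjection $f : I_X \to I_Y$ such that $f(B)$ is clopen in $I_Y$ for every $B \in \mathcal{B}$, but $f$ is not closed--$F_\sigma$, i.e. there is a closed set $F \subseteq I_X$ such that $f(F)$ is not an $F_\sigma$ subset of $I_Y$.
   Context: A function is closed--$F_\sigma$ if it maps every closed set to an $F_\sigma$ set (a countable union of closed sets). *)

theory Defs
  imports "HOL-Analysis.Analysis"
begin

definition polish_subspace :: "'a::topological_space set \<Rightarrow> bool" where
  "polish_subspace S \<longleftrightarrow>
     completely_metrizable_space (top_of_set S) \<and> separable_space (top_of_set S)"

end

theory Submission
  imports Defs
begin

lemma sc_euclid: "second_countable (euclidean :: 'a::second_countable_topology topology)"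
proof -
  obtain B :: "'a set set" where B: "countable B" "topological_basis B"
    using ex_countable_basis by blast
  show ?thesis unfolding second_countable_def
    using B by (metis open_openin topological_basisE topological_basis_open)
qed

lemma polish_gdelta: "gdelta_in euclidean (S::complex set) \<Longrightarrow> polish_subspace S"
  unfolding polish_subspace_def
  by (simp add: completely_metrizable_space_gdelta_in completely_metrizable_space_euclidean
      second_countable_imp_separable_space second_countable_subtopology sc_euclid)

lemma irr_between:
  fixes a b s :: real
  assumes "a < b" "s \<notin> \<rat>"
  shows "\<exists>t. a < t \<and> t < b \<and> t \<notin> \<rat> \<and> t \<noteq> s"
proof -
  obtain r1 where r1: "r1 \<in> \<rat>" "a - s < r1" "r1 < (a+b)/2 - s"
    using Rats_dense_in_real[of "a - s" "(a+b)/2 - s"] assms by auto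
  obtain r2 where r2: "r2 \<in> \<rat>" "(a+b)/2 - s < r2" "r2 < b - s"
    using Rats_dense_in_real[of "(a+b)/2 - s" "b - s"] assms by auto
  have irr: "r + s \<notin> \<rat>" if "r \<in> \<rat>" for r
  proof
    assume "r + s \<in> \<rat>"
    then have "(r + s) - r \<in> \<rat>" using that Rats_diff by blast
    then show False using assms by simp
  qed
  show ?thesis
  proof (cases "r1 = 0")
    case True
    have "a < r2 + s" "r2 + s < b" "r2 \<noteq> 0" using r1 r2 True by linarith+
    then show ?thesis using r2 irr[of r2] True by (intro exI[of _ "r2 + s"]) auto
  next
    case False
    have "a < r1 + s" "r1 + s < b" using r1 r2 by linarith+
    then show ?thesis using r1 irr[of r1] False by (intro exI[of _ "r1 + s"]) auto
  qed
qed

theorem mainTheorem4: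
  shows "\<exists>(IX :: complex set) (IY :: complex set) (\<B> :: complex set set) (f :: complex \<Rightarrow> complex).
    polish_subspace IX \<and> polish_subspace IY \<and>
    openin (top_of_set IX) = arbitrary union_of (\<lambda>B. B \<in> \<B>) \<and>
    (\<forall>B\<in>\<B>. openin (top_of_set IX) B \<and> closedin (top_of_set IX) B) \<and>
    continuous_map (top_of_set IX) (top_of_set IY) f \<and>
    open_map (top_of_set IX) (top_of_set IY) f \<and>
    f ` IX = IY \<and>
    (\<forall>B\<in>\<B>. openin (top_of_set IY) (f ` B) \<and> closedin (top_of_set IY) (f ` B)) \<and>
    (\<exists>F. closedin (top_of_set IX) F \<and> \<not> fsigma_in (top_of_set IY) (f ` F))"
proof -
  obtain s :: real where s: "s \<notin> \<rat>"
    using countable_rat uncountable_UNIV_real countable_subset by (metis subsetI)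
  define IX where "IX = {z. Re z \<notin> \<rat> \<and> Im z \<notin> \<rat> \<and> \<not> (Re z - s \<in> \<rat> \<and> Im z = s)}"
  define IY where "IY = {z. Im z = 0 \<and> Re z \<notin> \<rat>}"
  define f where "f = (\<lambda>z. complex_of_real (Re z))"
  define rb where "rb a b c d = {z. a < Re z \<and> Re z < b \<and> c < Im z \<and> Im z < d}" for a b c d :: real
  define \<B> where "\<B> = {IX \<inter> rb a b c d | a b c d. a\<in>\<rat> \<and> b\<in>\<rat> \<and> c\<in>\<rat> \<and> d\<in>\<rat> \<and> a<b \<and> c<d}"
  define F where "F = IX \<inter> {z. Im z = s}"
  have fre [simp]: "Re (f z) = Re z" "Im (f z) = 0" for z by (auto simp: f_def)
  have IXin: "Complex x t \<in> IX" if "x \<notin> \<rat>" "t \<notin> \<rat>" "t \<noteq> s" for x t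
    using that by (simp add: IX_def)
  have cl1: "closed {z::complex. Re z = q}" "closed {z::complex. Im z = q}" for q
    by (intro closed_Collect_eq continuous_intros)+
  have "IX = topspace euclidean - \<Union> (((\<lambda>q. {z. Re z = q}) ` \<rat>) \<union> ((\<lambda>q. {z. Im z = q}) ` \<rat>)
             \<union> ((\<lambda>q. {Complex (q+s) s}) ` \<rat>))"
  proof (rule set_eqI)
    fix z :: complex
    have "(Re z - s \<in> \<rat> \<and> Im z = s) \<longleftrightarrow> (\<exists>q\<in>\<rat>. z = Complex (q+s) s)"
      by (auto simp: complex_eq_iff intro!: bexI[of _ "Re z - s"])
    then show "z \<in> IX \<longleftrightarrow> z \<in> topspace euclidean - \<Union> (((\<lambda>q. {z. Re z = q}) ` \<rat>) \<union> ((\<lambda>q. {z. Im z = q}) ` \<rat>)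
             \<union> ((\<lambda>q. {Complex (q+s) s}) ` \<rat>))"
      unfolding IX_def by auto
  qed
  moreover have "fsigma_in euclidean (\<Union> (((\<lambda>q. {z. Re z = q}) ` \<rat>) \<union> ((\<lambda>q. {z. Im z = q}) ` \<rat>)
             \<union> ((\<lambda>q. {Complex (q+s) s}) ` \<rat>)))"
    by (intro fsigma_in_Union) (auto intro!: closed_imp_fsigma_in simp: countable_rat cl1 closed_closedin[symmetric])
  ultimately have "gdelta_in euclidean IX"
    by (metis gdelta_in_diff gdelta_in_topspace)
  then have polX: "polish_subspace IX" by (rule polish_gdelta)
  have "IY = {z. Im z = 0} - \<Union> ((\<lambda>q. {z. Re z = q}) ` \<rat>)"
    unfolding IY_def by auto
  moreover have "fsigma_in euclidean (\<Union> ((\<lambda>q. {z::complex. Re z = q}) ` \<rat>))"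
    by (intro fsigma_in_Union) (auto intro!: closed_imp_fsigma_in simp: countable_rat cl1 closed_closedin[symmetric])
  moreover have "gdelta_in euclidean {z::complex. Im z = 0}"
    by (rule closed_imp_gdelta_in[OF metrizable_space_euclidean]) (simp add: cl1 closed_closedin[symmetric])
  ultimately have "gdelta_in euclidean IY"
    by (metis gdelta_in_diff)
  then have polY: "polish_subspace IY" by (rule polish_gdelta)
  have rbopen: "open (rb a b c d)" for a b c d
    unfolding rb_def by (intro open_Collect_conj open_Collect_less continuous_intros)
  have Bclosed: "closedin (top_of_set IX) (IX \<inter> rb a b c d)" if "a\<in>\<rat>" "b\<in>\<rat>" "c\<in>\<rat>" "d\<in>\<rat>" for a b c d
  proof -
    have "IX \<inter> rb a b c d = IX \<inter> {z. a \<le> Re z \<and> Re z \<le> b \<and> c \<le> Im z \<and> Im z \<le> d}"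
      using that unfolding IX_def rb_def by (auto simp: order_le_less) 
    moreover have "closed {z::complex. a \<le> Re z \<and> Re z \<le> b \<and> c \<le> Im z \<and> Im z \<le> d}"
      by (intro closed_Collect_conj closed_Collect_le continuous_intros)
    ultimately show ?thesis by (simp add: closedin_closed_Int)
  qed
  have basis: "openin (top_of_set IX) = arbitrary union_of (\<lambda>B. B \<in> \<B>)"
    unfolding openin_topology_base_unique
  proof (intro conjI allI impI)
    fix V assume "V \<in> \<B>"
    then show "openin (top_of_set IX) V" unfolding \<B>_def using rbopen by auto
  next
    fix U x assume Ux: "openin (top_of_set IX) U \<and> x \<in> U"
    then obtain e where e: "e > 0" "\<And>x'. x' \<in> IX \<Longrightarrow> dist x' x < e \<Longrightarrow> x' \<in> U"
      by (auto simp: openin_euclidean_subtopology_iff)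
    obtain a where a: "a \<in> \<rat>" "Re x - e/2 < a" "a < Re x" using Rats_dense_in_real[of "Re x - e/2" "Re x"] e by auto
    obtain b where b: "b \<in> \<rat>" "Re x < b" "b < Re x + e/2" using Rats_dense_in_real[of "Re x" "Re x + e/2"] e by auto
    obtain c where c: "c \<in> \<rat>" "Im x - e/2 < c" "c < Im x" using Rats_dense_in_real[of "Im x - e/2" "Im x"] e by auto
    obtain d where d: "d \<in> \<rat>" "Im x < d" "d < Im x + e/2" using Rats_dense_in_real[of "Im x" "Im x + e/2"] e by auto
    have xIX: "x \<in> IX" using Ux by (meson openin_imp_subset subsetD)
    show "\<exists>V. V \<in> \<B> \<and> x \<in> V \<and> V \<subseteq> U"
    proof (intro exI conjI)
      show "IX \<inter> rb a b c d \<in> \<B>" unfolding \<B>_def using a b c d by fastforce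
      show "x \<in> IX \<inter> rb a b c d" using xIX a b c d by (simp add: rb_def)
      show "IX \<inter> rb a b c d \<subseteq> U"
      proof
        fix z assume z: "z \<in> IX \<inter> rb a b c d"
        have "dist z x \<le> \<bar>Re (z - x)\<bar> + \<bar>Im (z - x)\<bar>" unfolding dist_norm by (rule cmod_le)
        also have "\<dots> < e" using z a b c d by (auto simp: rb_def abs_less_iff)
        finally show "z \<in> U" using e z by auto
      qed
    qed
  qed
  have Bclopen: "\<forall>B\<in>\<B>. openin (top_of_set IX) B \<and> closedin (top_of_set IX) B"
    unfolding \<B>_def using rbopen Bclosed by auto
  have fcont: "continuous_map (top_of_set IX) (top_of_set IY) f"
    by (auto simp: f_def IX_def IY_def intro!: continuous_intros)
  have fsurj: "f ` IX = IY"
  proof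
    show "f ` IX \<subseteq> IY" by (auto simp: IX_def IY_def)
    show "IY \<subseteq> f ` IX"
    proof
      fix y assume y: "y \<in> IY"
      obtain t where t: "t \<notin> \<rat>" "t \<noteq> s" using irr_between[of 0 1 s] s by auto
      have "y = f (Complex (Re y) t)" using y by (simp add: IY_def complex_eq_iff)
      moreover have "Complex (Re y) t \<in> IX" using y t by (intro IXin) (auto simp: IY_def)
      ultimately show "y \<in> f ` IX" by blast
    qed
  qed
  have fopen: "open_map (top_of_set IX) (top_of_set IY) f"
    unfolding open_map_def
  proof (intro allI impI)
    fix U assume U: "openin (top_of_set IX) U"
    then have UIX: "U \<subseteq> IX" by (meson openin_imp_subset)
    show "openin (top_of_set IY) (f ` U)"
      unfolding openin_euclidean_subtopology_iff
    proof (intro conjI ballI)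
      show "f ` U \<subseteq> IY" using UIX fsurj by blast
    next
      fix y assume "y \<in> f ` U"
      then obtain z where z: "z \<in> U" "y = f z" by blast
      obtain e where e: "e > 0" "\<And>x'. x' \<in> IX \<Longrightarrow> dist x' z < e \<Longrightarrow> x' \<in> U"
        using U z by (auto simp: openin_euclidean_subtopology_iff)
      show "\<exists>e>0. \<forall>x'\<in>IY. dist x' y < e \<longrightarrow> x' \<in> f ` U"
      proof (intro exI[of _ "e/2"] conjI ballI impI)
        show "e/2 > 0" using e by simp
        fix y' assume y': "y' \<in> IY" "dist y' y < e/2"
        obtain t where t: "Im z < t" "t < Im z + e/2" "t \<notin> \<rat>" "t \<noteq> s"
          using irr_between[of "Im z" "Im z + e/2" s] s e by auto
        have "\<bar>Re (y' - y)\<bar> < e/2" using y' abs_Re_le_cmod[of "y' - y"] by (simp add: dist_norm)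
        then have "\<bar>Re y' - Re z\<bar> < e/2" using z by simp
        have "dist (Complex (Re y') t) z \<le> \<bar>Re (Complex (Re y') t - z)\<bar> + \<bar>Im (Complex (Re y') t - z)\<bar>"
          unfolding dist_norm by (rule cmod_le)
        also have "\<dots> < e" using \<open>\<bar>Re y' - Re z\<bar> < e/2\<close> t by auto
        finally have "Complex (Re y') t \<in> U" using e(2) IXin[of "Re y'" t] y' t by (auto simp: IY_def)
        moreover have "y' = f (Complex (Re y') t)" using y' by (simp add: IY_def complex_eq_iff)
        ultimately show "y' \<in> f ` U" by blast
      qed
    qed
  qed
  have Bimg: "\<forall>B\<in>\<B>. openin (top_of_set IY) (f ` B) \<and> closedin (top_of_set IY) (f ` B)"
  proof
    fix B assume "B \<in> \<B>"
    then obtain a b c d where B: "B = IX \<inter> rb a b c d" "a\<in>\<rat>" "b\<in>\<rat>" "c\<in>\<rat>" "d\<in>\<rat>" "a<b" "c<d"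
      unfolding \<B>_def by blast
    have eq: "f ` B = IY \<inter> {y. a < Re y \<and> Re y < b}"
    proof
      show "f ` B \<subseteq> IY \<inter> {y. a < Re y \<and> Re y < b}" using B fsurj by (auto simp: rb_def)
      show "IY \<inter> {y. a < Re y \<and> Re y < b} \<subseteq> f ` B"
      proof
        fix y assume y: "y \<in> IY \<inter> {y. a < Re y \<and> Re y < b}"
        obtain t where t: "c < t" "t < d" "t \<notin> \<rat>" "t \<noteq> s" using irr_between[of c d s] s B by auto
        have "y = f (Complex (Re y) t)" using y by (simp add: IY_def complex_eq_iff)
        moreover have "Complex (Re y) t \<in> B" using y t B IXin[of "Re y" t] by (auto simp: IY_def rb_def)
        ultimately show "y \<in> f ` B" by blast
      qed
    qed
    have eq2: "IY \<inter> {y. a < Re y \<and> Re y < b} = IY \<inter> {y. a \<le> Re y \<and> Re y \<le> b}"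
      using B unfolding IY_def by (auto simp: order_le_less)
    have "open {y::complex. a < Re y \<and> Re y < b}"
      by (intro open_Collect_conj open_Collect_less continuous_intros)
    moreover have "closed {y::complex. a \<le> Re y \<and> Re y \<le> b}"
      by (intro closed_Collect_conj closed_Collect_le continuous_intros)
    ultimately show "openin (top_of_set IY) (f ` B) \<and> closedin (top_of_set IY) (f ` B)"
      unfolding eq by (metis eq2 openin_open_Int closedin_closed_Int)
  qed
  have Fcl: "closedin (top_of_set IX) F"
    unfolding F_def using cl1 by (simp add: closedin_closed_Int)
  have fF: "f ` F = {y. Im y = 0 \<and> Re y \<notin> \<rat> \<and> Re y - s \<notin> \<rat>}"
  proof
    show "f ` F \<subseteq> {y. Im y = 0 \<and> Re y \<notin> \<rat> \<and> Re y - s \<notin> \<rat>}" by (auto simp: F_def IX_def)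
    show "{y. Im y = 0 \<and> Re y \<notin> \<rat> \<and> Re y - s \<notin> \<rat>} \<subseteq> f ` F"
    proof
      fix y assume y: "y \<in> {y. Im y = 0 \<and> Re y \<notin> \<rat> \<and> Re y - s \<notin> \<rat>}"
      have "y = f (Complex (Re y) s)" using y by (simp add: complex_eq_iff)
      moreover have "Complex (Re y) s \<in> F" using y s by (auto simp: F_def IX_def)
      ultimately show "y \<in> f ` F" by blast
    qed
  qed
  have notfs: "\<not> fsigma_in (top_of_set IY) (f ` F)"
  proof
    assume "fsigma_in (top_of_set IY) (f ` F)"
    then obtain \<U> where U: "countable \<U>" "\<And>C. C \<in> \<U> \<Longrightarrow> closedin (top_of_set IY) C" "\<Union>\<U> = f ` F"
      unfolding fsigma_in_def union_of_def by auto
    then have "\<forall>C\<in>\<U>. \<exists>K. closed K \<and> C = IY \<inter> K" by (simp add: closedin_closed)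
    then obtain K where K: "\<And>C. C \<in> \<U> \<Longrightarrow> closed (K C) \<and> C = IY \<inter> K C" by metis
    define \<G> where "\<G> = ((\<lambda>C. complex_of_real -` K C) ` \<U>) \<union> ((\<lambda>q. {q}) ` \<rat>) \<union> ((\<lambda>q. {q + s}) ` \<rat>)"
    have irr: "q + s \<notin> \<rat>" if "q \<in> \<rat>" for q
    proof
      assume "q + s \<in> \<rat>"
      then have "(q + s) - q \<in> \<rat>" using that Rats_diff by blast
      then show False using s by simp
    qed
    have "euclidean interior_of \<Union>\<G> = {}"
    proof (rule Baire_category_alt)
      show "completely_metrizable_space (euclidean::real topology) \<or> locally_compact_space (euclidean::real topology) \<and> regular_space (euclidean::real topology)"
        by (simp add: completely_metrizable_space_euclidean)
      show "countable \<G>" unfolding \<G>_def using U(1) countable_rat by auto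
    next
      fix T assume "T \<in> \<G>"
      then consider (a) C where "C \<in> \<U>" "T = complex_of_real -` K C" | (b) q where "T = {q}" | (c) q where "T = {q + s}"
        unfolding \<G>_def by blast
      then show "closedin euclidean T \<and> euclidean interior_of T = {}"
      proof cases
        case a
        have "closed T" unfolding a(2) using K[OF a(1)]
          by (intro continuous_closed_vimage) (auto intro: continuous_intros)
        moreover have "interior T = {}"
        proof (rule ccontr)
          assume "interior T \<noteq> {}"
          then obtain x e where xe: "e > 0" "ball x e \<subseteq> T" by (metis all_not_in_conv mem_interior)
          obtain r where r: "r \<in> \<rat>" "x - e - s < r" "r < x - s"
            using Rats_dense_in_real[of "x - e - s" "x - s"] xe by auto
          have "r + s \<in> ball x e" using r by (auto simp: dist_real_def)
          then have "complex_of_real (r + s) \<in> K C" using xe a by auto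
          moreover have "complex_of_real (r + s) \<in> IY" using irr[OF r(1)] by (simp add: IY_def)
          ultimately have "complex_of_real (r + s) \<in> \<Union>\<U>" using K[OF a(1)] a(1) by blast
          then show False using U(3) fF r(1) by auto
        qed
        ultimately show ?thesis by (simp add: closed_closedin[symmetric])
      qed (auto simp: closed_closedin[symmetric])
    qed
    moreover have "\<Union>\<G> = UNIV"
    proof (rule set_eqI, rule iffI)
      fix x :: real
      show "x \<in> \<Union>\<G>"
      proof (cases "x \<in> \<rat> \<or> x - s \<in> \<rat>")
        case True
        then show ?thesis
        proof
          assume "x \<in> \<rat>" then show ?thesis unfolding \<G>_def by auto
        next
          assume "x - s \<in> \<rat>"
          then have "{(x - s) + s} \<in> \<G>" unfolding \<G>_def by blast
          then show ?thesis by auto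
        qed
      next
        case False
        then have "complex_of_real x \<in> \<Union>\<U>" using U(3) fF by auto
        then obtain C where "C \<in> \<U>" "complex_of_real x \<in> C" by blast
        then show ?thesis using K unfolding \<G>_def by blast
      qed
    qed auto
    ultimately show False by simp
  qed
  show ?thesis
    using polX polY basis Bclopen fcont fopen fsurj Bimg Fcl notfs by blast
qed

end
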